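(* Let $W\subset\operatorname{Sym}(n,\mathbb{R})$ be a non-trivial linear subspace, let $r\ge0$, and let $A\in W$ have maximal rank in $W$ (i.e. $\operatorname{rank}A=\max_{M\in W}\operatorname{rank}M$) and signature $(k,\ell_1)$ with $k\ge2$. Then there is $\varepsilon>0$ such that the following holds for every $B\in W$ with $\|B-A\|<\varepsilon$: if $\partial\Gamma_A^r$ and $\partial\Gamma_B^r$ are varieties of dimension $n-1$ and there is no point of $\partial\Gamma_A^r\cap\partial\Gamma_B^r$ at which they intersect transversally, then $\Gamma_A^r\subset\Gamma_B^r$ or $\Gamma_B^r\subset\Gamma_A^r$.
   Context: For $M\in\operatorname{Sym}(n,\mathbb{R})$, $Q_M(z)={}^tzMz$ and $\Gamma_M^r:=\{z\in\mathbb{R}^n:Q_M(z)\le r\}$. Signature $(k,\ell_1)$ means $k$ positive and $\ell_1$ negative eigenvalues. $\partial\Gamma_M^r$ denotes the topological boundary; it is called a variety of dimension $n-1$ if there is some $z\in\partial\Gamma_M^r$ with $Mz\ne0$. The boundaries $\partial\Gamma_A^r$ and $\partial\Gamma_B^r$ intersect transversally at $z\in\partial\Gamma_A^r\cap\partial\Gamma_B^r$ if $Az$ and $Bz$ are linearly independent. $\|\cdot\|$ is any norm on $\operatorname{Sym}(n,\mathbb{R})$. *)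

theory Defs
  imports "HOL-Analysis.Analysis"
begin

definition symmetric_mat :: "real^'n^'n \<Rightarrow> bool" where
  "symmetric_mat M \<longleftrightarrow> transpose M = M"

definition Qform :: "real^'n^'n \<Rightarrow> real^'n \<Rightarrow> real" where
  "Qform M z = z \<bullet> (M *v z)"

definition Gamma :: "real^'n^'n \<Rightarrow> real \<Rightarrow> (real^'n) set" where
  "Gamma M r = {z. Qform M z \<le> r}"

text \<open>Multiplicity of an eigenvalue of a symmetric matrix: dimension of its eigenspace
  (geometric = algebraic multiplicity for symmetric matrices).\<close>
definition eig_mult :: "real^'n^'n \<Rightarrow> real \<Rightarrow> nat" where
  "eig_mult M c = dim {x. M *v x = c *\<^sub>R x}"

definition num_pos_eig :: "real^'n^'n \<Rightarrow> nat" where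
  "num_pos_eig M = (\<Sum>c\<in>{c. c > 0 \<and> (\<exists>x. x \<noteq> 0 \<and> M *v x = c *\<^sub>R x)}. eig_mult M c)"

definition num_neg_eig :: "real^'n^'n \<Rightarrow> nat" where
  "num_neg_eig M = (\<Sum>c\<in>{c. c < 0 \<and> (\<exists>x. x \<noteq> 0 \<and> M *v x = c *\<^sub>R x)}. eig_mult M c)"

definition signature :: "real^'n^'n \<Rightarrow> nat \<times> nat" where
  "signature M = (num_pos_eig M, num_neg_eig M)"

definition bdry_is_variety :: "real^'n^'n \<Rightarrow> real \<Rightarrow> bool" where
  "bdry_is_variety M r \<longleftrightarrow> (\<exists>z \<in> frontier (Gamma M r). M *v z \<noteq> 0)"

definition transversal_at :: "real^'n^'n \<Rightarrow> real^'n^'n \<Rightarrow> real^'n \<Rightarrow> bool" where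
  "transversal_at A B z \<longleftrightarrow>
     (\<forall>a b::real. a *\<^sub>R (A *v z) + b *\<^sub>R (B *v z) = 0 \<longrightarrow> a = 0 \<and> b = 0)"

end

theory Submission
  imports Defs
begin



lemma sym_dot:
  assumes "symmetric_mat A"
  shows "(A *v x) \<bullet> y = x \<bullet> (A *v y)"
proof -
  have "A *v x = x v* A" using assms unfolding symmetric_mat_def
    by (metis vector_transpose_matrix)
  then show ?thesis by (simp add: dot_lmul_matrix)
qed

lemma Q_lin2:
  assumes "symmetric_mat A"
  shows "Qform A (a *\<^sub>R x + b *\<^sub>R y) = a^2 * Qform A x + 2*a*b*(x \<bullet> (A *v y)) + b^2 * Qform A y"
proof -
  have "y \<bullet> (A *v x) = x \<bullet> (A *v y)" using sym_dot[OF assms, of x y] by (simp add: inner_commute)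
  then show ?thesis unfolding Qform_def
    by (simp add: matrix_vector_right_distrib matrix_vector_mult_scaleR inner_add_left inner_add_right algebra_simps power2_eq_square)
qed

lemma Q_diff: "Qform (B - A) z = Qform B z - Qform A z"
  unfolding Qform_def by (simp add: matrix_vector_mult_diff_rdistrib inner_diff_right)

lemma norm_mv: "norm ((C::real^'n^'m) *v x) \<le> real CARD('m) * norm C * norm x"
proof -
  have "norm (C *v x) \<le> (\<Sum>i\<in>UNIV. \<bar>(C *v x) $ i\<bar>)" by (rule norm_le_l1_cart)
  also have "\<dots> \<le> (\<Sum>i\<in>(UNIV::'m set). norm C * norm x)"
  proof (rule sum_mono)
    fix i
    have "\<bar>(C *v x) $ i\<bar> \<le> norm (C $ i) * norm x"
      by (simp add: matrix_mult_dot Cauchy_Schwarz_ineq2)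
    also have "\<dots> \<le> norm C * norm x" using Finite_Cartesian_Product.norm_nth_le[of C i] by (simp add: mult_right_mono)
    finally show "\<bar>(C *v x) $ i\<bar> \<le> norm C * norm x" .
  qed
  finally show ?thesis by simp
qed

lemma Q_bound: "\<bar>Qform (C::real^'n^'n) x\<bar> \<le> real CARD('n) * norm C * (norm x)^2"
proof -
  have "\<bar>Qform C x\<bar> \<le> norm x * norm (C *v x)" unfolding Qform_def by (rule Cauchy_Schwarz_ineq2)
  also have "\<dots> \<le> norm x * (real CARD('n) * norm C * norm x)" by (simp add: mult_left_mono norm_mv)
  finally show ?thesis by (simp add: power2_eq_square algebra_simps)
qed




lemma ivt01:
  fixes f :: "real \<Rightarrow> real"
  assumes "continuous_on {0..1} f" "f 0 > 0" "f 1 < 0"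
  shows "\<exists>x. 0 < x \<and> x < 1 \<and> f x = 0"
proof -
  obtain x where "0 \<le> x" "x \<le> 1" "f x = 0" using IVT2'[of f 1 0 0] assms by force
  moreover have "x \<noteq> 0" "x \<noteq> 1" using assms \<open>f x = 0\<close> by auto
  ultimately show ?thesis by (intro exI[of _ x]) auto
qed

lemma quartic:
  fixes c0 c1 c2 c3 c4 :: real
  assumes crit: "\<And>t. c0 + c1*t + c2*t^2 + c3*t^3 + c4*t^4 = 0 \<Longrightarrow> c1 + 2*c2*t + 3*c3*t^2 + 4*c4*t^3 = 0"
    and inf: "c4 = 0 \<Longrightarrow> c3 = 0"
    and p0: "c0 > 0" and p1: "c0 + c1 + c2 + c3 + c4 < 0"
  shows False
proof -
  define P where "P = (\<lambda>t::real. c0 + c1*t + c2*t^2 + c3*t^3 + c4*t^4)"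
  have "continuous_on {0..1} P" unfolding P_def by (intro continuous_intros)
  then obtain r where r: "0 < r" "r < 1" "P r = 0" using ivt01[of P] p0 p1 by (auto simp: P_def)
  have Dr: "c1 + 2*c2*r + 3*c3*r^2 + 4*c4*r^3 = 0" using crit r(3) by (simp add: P_def)
  have c1: "c1 = - 2*c2*r - 3*c3*r^2 - 4*c4*r^3" using Dr by simp
  have c0: "c0 = c2*r^2 + 2*c3*r^3 + 3*c4*r^4" using r(3) unfolding P_def c1
    by (simp add: algebra_simps power2_eq_square power3_eq_cube power4_eq_xxxx) 
  define a2 where "a2 = c4"
  define a1 where "a1 = c3 + 2*r*c4"
  define a0 where "a0 = c2 + 2*r*c3 + 3*r^2*c4"
  define q where "q = (\<lambda>t::real. a0 + a1*t + a2*t^2)"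
  have Pq: "P t = (t - r)^2 * q t" for t
    unfolding P_def q_def a0_def a1_def a2_def c0 c1
    by (simp add: algebra_simps power2_eq_square power3_eq_cube power4_eq_xxxx)
  have Dq: "c1 + 2*c2*t + 3*c3*t^2 + 4*c4*t^3 = 2*(t-r)*q t + (t-r)^2*(a1 + 2*a2*t)" for t
    unfolding q_def a0_def a1_def a2_def c1
    by (simp add: algebra_simps power2_eq_square power3_eq_cube)
  have q0: "q 0 > 0" using Pq[of 0] p0 r by (simp add: P_def zero_less_mult_iff)
  have q1: "q 1 < 0"
  proof -
    have "P 1 < 0" using p1 by (simp add: P_def)
    then show ?thesis using Pq[of 1] by (simp add: mult_less_0_iff)
  qed
  have "continuous_on {0..1} q" unfolding q_def by (intro continuous_intros)
  then obtain s where s: "0 < s" "s < 1" "q s = 0" using ivt01[of q] q0 q1 by auto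
  have "P s = 0" using Pq s by simp
  then have "c1 + 2*c2* s + 3*c3* s^2 + 4*c4* s^3 = 0" using crit by (simp add: P_def)
  then have "(s-r)^2*(a1 + 2*a2* s) = 0" using Dq[of s] s(3) by simp
  then consider "a1 + 2*a2* s = 0" | "s = r" by auto
  then show False
  proof cases
    case 1
    have a1: "a1 = -2*a2* s" using 1 by simp
    have a0: "a0 = a2* s^2" using s(3) unfolding q_def a1 by (simp add: algebra_simps power2_eq_square)
    have "q 0 = a2 * s^2" "q 1 = a2 * (1-s)^2" unfolding q_def a0 a1 by (simp_all add: algebra_simps power2_eq_square)
    then have "a2 > 0" using q0 by (metis zero_le_power2 zero_less_mult_pos2 not_le mult_nonpos_nonneg)
    then have "q 1 \<ge> 0" using \<open>q 1 = a2 * (1-s)^2\<close> by simp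
    then show False using q1 by simp
  next
    case 2
    define \<beta> where "\<beta> = a1 + a2*r"
    have a0: "a0 = - a1*r - a2*r^2" using s(3) 2 unfolding q_def by simp
    have Pl: "P t = (t-r)^3 * (a2*t + \<beta>)" for t
      using Pq[of t] unfolding q_def a0 \<beta>_def by (simp add: algebra_simps power2_eq_square power3_eq_cube)
    have Dl: "c1 + 2*c2*t + 3*c3*t^2 + 4*c4*t^3 = 3*(t-r)^2*(a2*t+\<beta>) + (t-r)^3*a2" for t
      using Dq[of t] unfolding q_def a0 \<beta>_def by (simp add: algebra_simps power2_eq_square power3_eq_cube)
    have "(0-r)^3 * \<beta> > 0" using Pl[of 0] p0 by (simp add: P_def)
    moreover have "(0-r)^3 < 0" using r by simp
    moreover have "\<And>x b::real. x < 0 \<Longrightarrow> 0 < x*b \<Longrightarrow> b < 0" by (auto simp: zero_less_mult_iff)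
    ultimately have b0: "\<beta> < 0" by blast
    have "(1-r)^3 * (a2 + \<beta>) < 0" using Pl[of 1] p1 by (simp add: P_def)
    moreover have "(1-r)^3 > 0" using r by simp
    ultimately have b1: "a2 + \<beta> < 0" by (simp add: mult_less_0_iff)
    show False
    proof (cases "a2 = 0")
      case True
      then have "c4 = 0" by (simp add: a2_def)
      then have "c3 = 0" using inf by simp
      then have "\<beta> = 0" using True \<open>c4 = 0\<close> by (simp add: \<beta>_def a1_def)
      then show False using b0 by simp
    next
      case False
      define t' where "t' = - \<beta> / a2"
      have "a2*t' + \<beta> = 0" using False by (simp add: t'_def)
      then have "P t' = 0" using Pl by simp
      then have "c1 + 2*c2*t' + 3*c3*t'^2 + 4*c4*t'^3 = 0" using crit by (simp add: P_def)
      then have "(t'-r)^3*a2 = 0" using Dl[of t'] \<open>a2*t' + \<beta> = 0\<close> by simp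
      then have "t' = r" using False by simp
      then have "a2*r + \<beta> = 0" using \<open>a2*t' + \<beta> = 0\<close> by simp
      moreover have "a2*r + \<beta> = (1-r)*\<beta> + r*(a2+\<beta>)" by (simp add: algebra_simps)
      moreover have "(1-r)*\<beta> < 0" using b0 r by (simp add: mult_pos_neg)
      moreover have "r*(a2+\<beta>) < 0" using b1 r by (simp add: mult_pos_neg)
      ultimately show False by linarith
    qed
  qed
qed




definition phi :: "real^'n^'n \<Rightarrow> real^'n \<Rightarrow> real^'n \<Rightarrow> real^'n" where
  "phi A y x = Qform A x *\<^sub>R y - (2 * (y \<bullet> (A *v x))) *\<^sub>R x"

definition phi1 :: "real^'n^'n \<Rightarrow> real^'n \<Rightarrow> real^'n \<Rightarrow> real^'n \<Rightarrow> real^'n" where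
  "phi1 A y x v = (2 * (x \<bullet> (A *v v))) *\<^sub>R y - (2 * (y \<bullet> (A *v v))) *\<^sub>R x - (2 * (y \<bullet> (A *v x))) *\<^sub>R v"

lemmas mvs = matrix_vector_mult_scaleR matrix_vector_right_distrib matrix_vector_mult_diff_distrib
  inner_add_left inner_add_right inner_diff_left inner_diff_right inner_scaleR_left inner_scaleR_right

lemma phi_Q0:
  assumes "symmetric_mat A" "Qform A y = 0"
  shows "Qform A (phi A y x) = 0"
proof -
  have s: "\<And>a b. (A *v a) \<bullet> b = a \<bullet> (A *v b)" using sym_dot[OF assms(1)] by blast
  have "y \<bullet> (A *v y) = 0" using assms(2) by (simp add: Qform_def)
  then show ?thesis using s[of x y] s[of y x]
    unfolding phi_def Qform_def by (simp add: mvs algebra_simps inner_commute power2_eq_square)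
qed

lemma phi_perp:
  assumes "symmetric_mat A" "Qform A y = 0"
  shows "(phi A y x) \<bullet> (A *v phi1 A y x v) = 0"
proof -
  have s: "\<And>a b. (A *v a) \<bullet> b = a \<bullet> (A *v b)" using sym_dot[OF assms(1)] by blast
  have "y \<bullet> (A *v y) = 0" using assms(2) by (simp add: Qform_def)
  then show ?thesis using s[of x y] s[of y x] s[of x v] s[of v x] s[of y v] s[of v y]
    unfolding phi_def phi1_def Qform_def by (simp add: mvs algebra_simps inner_commute)
qed

lemma phi_line:
  assumes "symmetric_mat A"
  shows "phi A y (x + t *\<^sub>R v) = phi A y x + t *\<^sub>R phi1 A y x v + (t^2) *\<^sub>R phi A y v"
proof -
  have s: "\<And>a b. (A *v a) \<bullet> b = a \<bullet> (A *v b)" using sym_dot[OF assms(1)] by blast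
  show ?thesis using s[of x v] s[of v x]
    unfolding phi_def phi1_def Qform_def by (simp add: mvs algebra_simps inner_commute power2_eq_square)
qed

lemma phi1_sym:
  assumes "symmetric_mat A"
  shows "phi1 A y x v = phi1 A y v x"
proof -
  have s: "\<And>a b. (A *v a) \<bullet> b = a \<bullet> (A *v b)" using sym_dot[OF assms(1)] by blast
  show ?thesis using s[of x v] s[of v x]
    unfolding phi1_def by (simp add: algebra_simps inner_commute)
qed

lemma phi1_line:
  assumes "symmetric_mat A"
  shows "phi1 A y (x + t *\<^sub>R v) v = phi1 A y x v + (2*t) *\<^sub>R phi A y v"
proof -
  show ?thesis
    unfolding phi1_def phi_def Qform_def
    by (simp add: mvs vec_eq_iff algebra_simps)
qed

lemma phi_ker:
  assumes "symmetric_mat A" "Qform A y = 0" "A *v y \<noteq> 0" "A *v phi A y x = 0"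
  shows "phi A y x = 0"
proof (rule ccontr)
  assume ne: "phi A y x \<noteq> 0"
  have s: "\<And>a b. (A *v a) \<bullet> b = a \<bullet> (A *v b)" using sym_dot[OF assms(1)] by blast
  have eq: "Qform A x *\<^sub>R (A *v y) = (2 * (y \<bullet> (A *v x))) *\<^sub>R (A *v x)"
    using assms(4) unfolding phi_def by (simp add: mvs)
  show False
  proof (cases "Qform A x = 0")
    case True
    then have "(2 * (y \<bullet> (A *v x))) *\<^sub>R (A *v x) = 0" using eq by simp
    then have "y \<bullet> (A *v x) = 0 \<or> A *v x = 0" by simp
    moreover have "A *v x = 0 \<Longrightarrow> y \<bullet> (A *v x) = 0" by simp
    ultimately have "y \<bullet> (A *v x) = 0" by blast
    then have "phi A y x = 0" using True by (simp add: phi_def)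
    then show False using ne by simp
  next
    case False
    define lam where "lam = 2 * (y \<bullet> (A *v x)) / Qform A x"
    have Ay: "A *v y = lam *\<^sub>R (A *v x)" using eq False unfolding lam_def
      by (metis (no_types, lifting) divide_inverse_commute inverse_eq_divide scaleR_scaleR vector_fraction_eq_iff)
    have "lam \<noteq> 0" using Ay assms(3) by auto
    have "Qform A y = lam^2 * Qform A x"
    proof -
      have "Qform A y = y \<bullet> (lam *\<^sub>R (A *v x))" using Ay by (simp add: Qform_def)
      also have "\<dots> = lam * ((A *v y) \<bullet> x)" using s[of y x] by simp
      also have "\<dots> = lam^2 * Qform A x" using Ay by (simp add: Qform_def power2_eq_square inner_commute)
      finally show ?thesis .
    qed
    then show False using assms(2) False \<open>lam \<noteq> 0\<close> by simp
  qed
qed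




lemma quartic_vec:
  fixes C :: "real^'n^'n" and p0 p1 p2 :: "real^'n"
  assumes sym: "symmetric_mat C"
    and crit: "\<And>t. Qform C (p0 + t *\<^sub>R p1 + (t^2) *\<^sub>R p2) = 0 \<Longrightarrow>
                 (p0 + t *\<^sub>R p1 + (t^2) *\<^sub>R p2) \<bullet> (C *v (p1 + (2*t) *\<^sub>R p2)) = 0"
    and inf: "Qform C p2 = 0 \<Longrightarrow> p2 \<bullet> (C *v p1) = 0"
    and pos: "Qform C p0 > 0" and neg: "Qform C (p0 + p1 + p2) < 0"
  shows False
proof -
  have s: "\<And>a b. (C *v a) \<bullet> b = a \<bullet> (C *v b)" using sym_dot[OF sym] by blast
  define c0 where "c0 = Qform C p0"
  define c1 where "c1 = 2 * (p0 \<bullet> (C *v p1))"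
  define c2 where "c2 = Qform C p1 + 2 * (p0 \<bullet> (C *v p2))"
  define c3 where "c3 = 2 * (p1 \<bullet> (C *v p2))"
  define c4 where "c4 = Qform C p2"
  have P: "Qform C (p0 + t *\<^sub>R p1 + (t^2) *\<^sub>R p2) = c0 + c1*t + c2*t^2 + c3*t^3 + c4*t^4" for t
    using s[of p0 p1] s[of p1 p0] s[of p0 p2] s[of p2 p0] s[of p1 p2] s[of p2 p1]
    unfolding c0_def c1_def c2_def c3_def c4_def Qform_def
    by (simp add: mvs algebra_simps inner_commute power2_eq_square power3_eq_cube power4_eq_xxxx)
  have D: "2 * ((p0 + t *\<^sub>R p1 + (t^2) *\<^sub>R p2) \<bullet> (C *v (p1 + (2*t) *\<^sub>R p2)))
      = c1 + 2*c2*t + 3*c3*t^2 + 4*c4*t^3" for t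
    using s[of p0 p1] s[of p1 p0] s[of p0 p2] s[of p2 p0] s[of p1 p2] s[of p2 p1]
    unfolding c0_def c1_def c2_def c3_def c4_def Qform_def
    by (simp add: mvs algebra_simps inner_commute power2_eq_square power3_eq_cube)
  show False
  proof (rule quartic[of c0 c1 c2 c3 c4])
    fix t :: real
    assume "c0 + c1*t + c2*t^2 + c3*t^3 + c4*t^4 = 0"
    then have "Qform C (p0 + t *\<^sub>R p1 + (t^2) *\<^sub>R p2) = 0" using P by simp
    then show "c1 + 2*c2*t + 3*c3*t^2 + 4*c4*t^3 = 0" using crit D[of t] by simp
  next
    assume "c4 = 0"
    then show "c3 = 0" using inf s[of p2 p1] unfolding c4_def c3_def by (simp add: inner_commute)
  next
    show "c0 > 0" using pos c0_def by simp
  next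
    show "c0 + c1 + c2 + c3 + c4 < 0" using P[of 1] neg by simp
  qed
qed




lemma small_t:
  fixes a b c :: real
  assumes "a > 0"
  shows "\<exists>t>0. a + b*t + c*t^2 > 0"
proof -
  define t where "t = min 1 (a / (2*(\<bar>b\<bar> + \<bar>c\<bar> + 1)))"
  have t0: "t > 0" using assms by (simp add: t_def)
  have t1: "t \<le> 1" by (simp add: t_def)
  have ta: "t * (\<bar>b\<bar> + \<bar>c\<bar> + 1) \<le> a/2"
  proof -
    have "t \<le> a / (2*(\<bar>b\<bar> + \<bar>c\<bar> + 1))" by (simp add: t_def)
    then have "t * (\<bar>b\<bar> + \<bar>c\<bar> + 1) \<le> a / (2*(\<bar>b\<bar> + \<bar>c\<bar> + 1)) * (\<bar>b\<bar> + \<bar>c\<bar> + 1)"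
      by (intro mult_right_mono) auto
    also have "\<dots> = a/2" by (simp add: field_simps)
    finally show ?thesis .
  qed
  have "\<bar>c*t^2\<bar> \<le> \<bar>c\<bar> * t"
  proof -
    have "t^2 \<le> t" using t0 t1 by (simp add: power2_eq_square mult_le_cancel_right1 less_imp_le)
    then show ?thesis using t0 by (simp add: abs_mult mult_left_mono)
  qed
  moreover have "\<bar>b*t\<bar> = \<bar>b\<bar> * t" using t0 by (simp add: abs_mult)
  ultimately have "\<bar>b*t + c*t^2\<bar> \<le> (\<bar>b\<bar> + \<bar>c\<bar>) * t" by (simp add: algebra_simps)
  also have "\<dots> \<le> t * (\<bar>b\<bar> + \<bar>c\<bar> + 1)" using t0 by (simp add: algebra_simps)
  finally have "\<bar>b*t + c*t^2\<bar> \<le> a/2" using ta by linarith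
  then have "a + b*t + c*t^2 > 0" using assms by linarith
  then show ?thesis using t0 by blast
qed

lemma seg_pos:
  assumes sym: "symmetric_mat M" and "Qform M a > 0" "Qform M b > 0" "a \<bullet> (M *v b) \<ge> 0"
    and "0 \<le> t" "t \<le> 1"
  shows "Qform M ((1-t) *\<^sub>R a + t *\<^sub>R b) > 0"
proof -
  have e: "Qform M ((1-t) *\<^sub>R a + t *\<^sub>R b) = (1-t)^2 * Qform M a + 2*(1-t)*t*(a \<bullet> (M *v b)) + t^2 * Qform M b"
    by (rule Q_lin2[OF sym])
  have "2*(1-t)*t*(a \<bullet> (M *v b)) \<ge> 0" using assms by simp
  moreover have "(1-t)^2 * Qform M a + t^2 * Qform M b > 0"
  proof (cases "t = 0")
    case True then show ?thesis using assms by simp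
  next
    case False
    then have "t^2 * Qform M b > 0" using assms by simp
    moreover have "(1-t)^2 * Qform M a \<ge> 0" using assms by simp
    ultimately show ?thesis by linarith
  qed
  ultimately show ?thesis using e by linarith
qed

lemma seg_neg:
  assumes sym: "symmetric_mat M" and "Qform M a \<le> 0" "Qform M b < 0" "a \<bullet> (M *v b) \<le> 0"
    and "0 < t" "t \<le> 1"
  shows "Qform M ((1-t) *\<^sub>R a + t *\<^sub>R b) < 0"
proof -
  have e: "Qform M ((1-t) *\<^sub>R a + t *\<^sub>R b) = (1-t)^2 * Qform M a + 2*(1-t)*t*(a \<bullet> (M *v b)) + t^2 * Qform M b"
    by (rule Q_lin2[OF sym])
  have "2*(1-t)*t*(a \<bullet> (M *v b)) \<le> 0" using assms by (simp add: mult_nonneg_nonpos)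
  moreover have "t^2 * Qform M b < 0" using assms by (simp add: mult_pos_neg)
  moreover have "(1-t)^2 * Qform M a \<le> 0" using assms by (simp add: mult_nonneg_nonpos)
  ultimately show ?thesis using e by linarith
qed

lemma cont_Q_seg: "continuous_on S (\<lambda>t. Qform M ((1-t) *\<^sub>R a + t *\<^sub>R b))"
  unfolding Qform_def by (intro continuous_intros continuous_on_compose2[OF matrix_vector_mult_linear_continuous_on[of UNIV M]]) auto




lemma sym_diff: "symmetric_mat A \<Longrightarrow> symmetric_mat B \<Longrightarrow> symmetric_mat (B - A)"
  unfolding symmetric_mat_def transpose_def by (simp add: vec_eq_iff)

lemma sym_neg: "symmetric_mat A \<Longrightarrow> symmetric_mat (- A)"
  unfolding symmetric_mat_def transpose_def by (simp add: vec_eq_iff)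

lemma Q_scale: "Qform M (c *\<^sub>R x) = c^2 * Qform M x"
  unfolding Qform_def by (simp add: mvs power2_eq_square)

lemma Q_neg: "Qform (- M) x = - Qform M x"
proof -
  have "(- M) *v x = - (M *v x)" by (simp add: matrix_vector_mult_def vec_eq_iff sum_negf)
  then show ?thesis unfolding Qform_def by simp
qed




lemma S1:
  assumes symA: "symmetric_mat A" and symB: "symmetric_mat B"
    and u: "Qform A u > 0" "Qform B u > 0" and q: "Qform A q \<le> 0" "Qform B q > 0"
  shows "\<exists>y. Qform A y = 0 \<and> Qform B y > 0"
proof -
  obtain u' where u': "Qform A u' > 0" "Qform B u' > 0" "q \<bullet> (B *v u') \<ge> 0"
  proof (cases "q \<bullet> (B *v u) \<ge> 0")
    case True then show ?thesis using that u by blast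
  next
    case False
    have "Qform A ((-1) *\<^sub>R u) > 0" "Qform B ((-1) *\<^sub>R u) > 0" using u Q_scale[of A "-1" u] Q_scale[of B "-1" u] by simp_all
    moreover have "q \<bullet> (B *v ((-1) *\<^sub>R u)) \<ge> 0" using False matrix_vector_mult_scaleR[of B "-1" u] by simp
    ultimately show ?thesis using that by blast
  qed
  obtain t where t: "0 \<le> t" "t \<le> 1" "Qform A ((1-t) *\<^sub>R q + t *\<^sub>R u') = 0"
    using IVT'[of "\<lambda>t. Qform A ((1-t) *\<^sub>R q + t *\<^sub>R u')" 0 0 1] q u' cont_Q_seg by force
  have "Qform B ((1-t) *\<^sub>R q + t *\<^sub>R u') > 0" by (rule seg_pos[OF symB]) (use q u' t in auto)
  then show ?thesis using t by blast
qed

lemma S1':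
  assumes symA: "symmetric_mat A" and symB: "symmetric_mat B"
    and w: "Qform A w < 0" "Qform B w < 0" and p: "Qform A p > 0" "Qform B p \<le> 0"
  shows "\<exists>y. Qform A y = 0 \<and> Qform B y < 0"
proof -
  obtain w' where w': "Qform A w' < 0" "Qform B w' < 0" "p \<bullet> (B *v w') \<le> 0"
  proof (cases "p \<bullet> (B *v w) \<le> 0")
    case True then show ?thesis using that w by blast
  next
    case False
    have "Qform A ((-1) *\<^sub>R w) < 0" "Qform B ((-1) *\<^sub>R w) < 0" using w Q_scale[of A "-1" w] Q_scale[of B "-1" w] by simp_all
    moreover have "p \<bullet> (B *v ((-1) *\<^sub>R w)) \<le> 0" using False matrix_vector_mult_scaleR[of B "-1" w] by simp
    ultimately show ?thesis using that by blast
  qed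
  obtain t where t: "0 \<le> t" "t \<le> 1" "Qform A ((1-t) *\<^sub>R p + t *\<^sub>R w') = 0"
    using IVT2'[of "\<lambda>t. Qform A ((1-t) *\<^sub>R p + t *\<^sub>R w')" 1 0 0] p w' cont_Q_seg by force
  have "t \<noteq> 0" using t p by auto
  have "Qform B ((1-t) *\<^sub>R p + t *\<^sub>R w') < 0" by (rule seg_neg[OF symB]) (use p w' t \<open>t \<noteq> 0\<close> in auto)
  then show ?thesis using t by blast
qed

lemma S2:
  assumes symA: "symmetric_mat A" and symN: "symmetric_mat N"
    and y0: "Qform A y0 = 0" "A *v y0 \<noteq> 0" and y: "Qform A y = 0" "Qform N y > 0"
  shows "\<exists>y'. Qform A y' = 0 \<and> A *v y' \<noteq> 0 \<and> Qform N y' > 0"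
proof (cases "A *v y = 0")
  case False then show ?thesis using y by blast
next
  case True
  obtain t where t: "t > 0" "Qform N y + (2 * (y \<bullet> (N *v y0))) * t + Qform N y0 * t^2 > 0"
    using small_t[of "Qform N y" "2 * (y \<bullet> (N *v y0))" "Qform N y0"] y by blast
  have e1: "Qform N (1 *\<^sub>R y + t *\<^sub>R y0) = Qform N y + (2 * (y \<bullet> (N *v y0))) * t + Qform N y0 * t^2"
    using Q_lin2[OF symN, of 1 y t y0] by (simp add: algebra_simps)
  have "y \<bullet> (A *v y0) = 0" using sym_dot[OF symA, of y y0] True by simp
  then have e2: "Qform A (1 *\<^sub>R y + t *\<^sub>R y0) = 0"
    using Q_lin2[OF symA, of 1 y t y0] y y0 by simp
  have e3: "A *v (1 *\<^sub>R y + t *\<^sub>R y0) \<noteq> 0" using True y0 t by (simp add: mvs)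
  show ?thesis using e1 e2 e3 t by (intro exI[of _ "1 *\<^sub>R y + t *\<^sub>R y0"]) simp
qed




lemma S3:
  fixes A B :: "real^'n^'n"
  assumes symA: "symmetric_mat A" and symB: "symmetric_mat B"
    and pp: "\<And>h. \<exists>x. x \<bullet> h = 0 \<and> Qform A x > 0"
    and H: "\<And>z. Qform A z = 0 \<Longrightarrow> Qform B z = 0 \<Longrightarrow> A *v z \<noteq> 0 \<Longrightarrow> \<exists>\<mu>. (B - A) *v z = \<mu> *\<^sub>R (A *v z)"
    and yp: "Qform A yp = 0" "A *v yp \<noteq> 0" "Qform B yp > 0"
    and yn: "Qform A yn = 0" "A *v yn \<noteq> 0" "Qform B yn < 0"
  shows False
proof -
  define C where "C = B - A"
  have symC: "symmetric_mat C" unfolding C_def by (rule sym_diff[OF symA symB])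
  have sA: "\<And>a b. (A *v a) \<bullet> b = a \<bullet> (A *v b)" using sym_dot[OF symA] by blast
  have sC: "\<And>a b. (C *v a) \<bullet> b = a \<bullet> (C *v b)" using sym_dot[OF symC] by blast
  have QC: "\<And>z. Qform C z = Qform B z - Qform A z" unfolding C_def by (rule Q_diff)
  have Hperp: "z \<bullet> (C *v w) = 0"
    if h1: "Qform A z = 0" and h2: "Qform C z = 0" and h3: "A *v z = 0 \<Longrightarrow> z = 0" and h4: "z \<bullet> (A *v w) = 0" for z w
  proof (cases "A *v z = 0")
    case True then show ?thesis using h3 by simp
  next
    case False
    have "Qform B z = 0" using h1 h2 QC[of z] by simp
    then obtain mu where mu: "C *v z = mu *\<^sub>R (A *v z)" using H[of z, OF h1 \<open>Qform B z = 0\<close> False] unfolding C_def by blast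
    have "z \<bullet> (C *v w) = (C *v z) \<bullet> w" using sC by simp
    also have "\<dots> = mu * ((A *v z) \<bullet> w)" using mu by simp
    also have "\<dots> = 0" using sA h4 by simp
    finally show ?thesis .
  qed
  have QCyp: "Qform C yp > 0" using QC yp by simp
  have QCyn: "Qform C yn < 0" using QC yn by simp
  show False
  proof (cases "\<exists>c. A *v yp = c *\<^sub>R (A *v yn)")
    case True
    then obtain c where c: "A *v yp = c *\<^sub>R (A *v yn)" by blast
    have c0: "c \<noteq> 0" using c yp by auto
    define k where "k = yp - c *\<^sub>R yn"
    have Ak: "A *v k = 0" unfolding k_def using c by (simp add: mvs)
    define z where "z = (\<lambda>t::real. 1 *\<^sub>R yn + (t/c) *\<^sub>R k)"
    have QAz: "Qform A (z t) = 0" for t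
      using Q_lin2[OF symA, of 1 yn "t/c" k] yn Ak unfolding z_def by (simp add: Qform_def)
    have Az: "A *v (z t) = A *v yn" for t unfolding z_def using Ak by (simp add: mvs)
    have hz: "Qform C (z t) = Qform C yn + 2*(t/c)*(yn \<bullet> (C *v k)) + (t/c)^2 * Qform C k" for t
      using Q_lin2[OF symC, of 1 yn "t/c" k] unfolding z_def by simp
    have "continuous_on {0..1} (\<lambda>t. Qform C (z t))"
      unfolding hz using c0 by (intro continuous_intros) auto
    moreover have "Qform C (z 0) < 0" using QCyn by (simp add: z_def)
    moreover have "z 1 = (1/c) *\<^sub>R yp" unfolding z_def k_def using c0 by (simp add: algebra_simps)
    then have "Qform C (z 1) > 0" using QCyp c0 by (simp add: Q_scale)
    ultimately obtain t0 where t0: "0 \<le> t0" "t0 \<le> 1" "Qform C (z t0) = 0"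
      using IVT'[of "\<lambda>t. Qform C (z t)" 0 0 1] by force
    have perp: "(z t0) \<bullet> (C *v k) = 0"
      by (rule Hperp) (use QAz t0 Az yn Ak in auto)
    have shift: "Qform C (1 *\<^sub>R z t0 + s *\<^sub>R k) = s^2 * Qform C k" for s
      using Q_lin2[OF symC, of 1 "z t0" s k] perp t0 by simp
    have "yn = 1 *\<^sub>R z t0 + (-(t0/c)) *\<^sub>R k" unfolding z_def by simp
    then have "Qform C yn = (t0/c)^2 * Qform C k" using shift by (metis power2_minus)
    then have QCk: "Qform C k < 0" using QCyn by (metis zero_le_power2 mult_nonneg_nonneg not_le mult_nonneg_nonpos2 less_le)
    have "(1/c) *\<^sub>R yp = 1 *\<^sub>R z t0 + ((1-t0)/c) *\<^sub>R k" unfolding z_def k_def using c0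
      by (simp add: algebra_simps diff_divide_distrib)
    then have "Qform C ((1/c) *\<^sub>R yp) \<le> 0" using shift QCk by (simp add: mult_nonneg_nonpos)
    moreover have "Qform C ((1/c) *\<^sub>R yp) > 0" using QCyp c0 by (simp add: Q_scale)
    ultimately show False by simp
  next
    case False
    note np = False
    obtain xp where xp: "xp \<bullet> (A *v yp) = 0" "Qform A xp > 0" using pp by blast
    have ypxp: "yp \<bullet> (A *v xp) = 0" using sA[of yp xp] xp by (simp add: inner_commute)
    define F where "F = (\<lambda>x. Qform C (phi A yp x))"
    have "phi A yp xp = Qform A xp *\<^sub>R yp" unfolding phi_def using ypxp by simp
    then have Fxp: "F xp > 0" unfolding F_def using QCyp xp by (simp add: Q_scale)
    obtain xn where Fxn: "F xn < 0"
    proof (cases "yp \<bullet> (A *v yn) = 0")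
      case False
      have pe: "phi A yp yn = (-(2 * (yp \<bullet> (A *v yn)))) *\<^sub>R yn" unfolding phi_def using yn by simp
      have "F yn = (-(2 * (yp \<bullet> (A *v yn))))^2 * Qform C yn" unfolding F_def pe Q_scale by simp
      moreover have "(-(2 * (yp \<bullet> (A *v yn))))^2 > 0" using False by simp
      ultimately have "F yn < 0" using QCyn by (simp add: mult_pos_neg)
      then show ?thesis using that by blast
    next
      case True
      define lam where "lam = ((A *v yp) \<bullet> (A *v yn)) / ((A *v yn) \<bullet> (A *v yn))"
      define v where "v = A *v yp - lam *\<^sub>R (A *v yn)"
      have nn: "(A *v yn) \<bullet> (A *v yn) \<noteq> 0" using yn by simp
      have vperp: "(A *v yn) \<bullet> v = 0" unfolding v_def lam_def using nn
        by (simp add: inner_diff_right inner_commute)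
      have vne: "v \<noteq> 0"
      proof
        assume "v = 0"
        then have "A *v yp = lam *\<^sub>R (A *v yn)" unfolding v_def by simp
        then show False using np by blast
      qed
      have ypv: "yp \<bullet> (A *v v) = v \<bullet> v"
      proof -
        have "yp \<bullet> (A *v v) = (A *v yp) \<bullet> v" using sA by simp
        also have "A *v yp = v + lam *\<^sub>R (A *v yn)" unfolding v_def by simp
        finally show ?thesis using vperp by (simp add: inner_add_right inner_commute)
      qed
      have ypv0: "yp \<bullet> (A *v v) \<noteq> 0" using ypv vne by simp
      have ynv: "yn \<bullet> (A *v v) = 0" using sA[of yn v] vperp by simp
      define g where "g = (-(2 * (yp \<bullet> (A *v v)))) *\<^sub>R yn"
      define h where "h = phi A yp v"
      have phi0: "phi A yp yn = 0" unfolding phi_def using yn True by simp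
      have phi1g: "phi1 A yp yn v = g" unfolding phi1_def g_def using ynv True by simp
      have phil: "phi A yp (yn + t *\<^sub>R v) = t *\<^sub>R (g + t *\<^sub>R h)" for t
        using phi_line[OF symA, of yp yn t v] phi0 phi1g unfolding h_def
        by (simp add: algebra_simps power2_eq_square)
      have "Qform C g = (-(2 * (yp \<bullet> (A *v v))))^2 * Qform C yn" unfolding g_def Q_scale by simp
      moreover have "(-(2 * (yp \<bullet> (A *v v))))^2 > 0" using ypv0 by simp
      ultimately have QCg: "Qform C g < 0" using QCyn by (simp add: mult_pos_neg)
      obtain t where t: "t > 0" "- Qform C g + (- 2 * (g \<bullet> (C *v h))) * t + (- Qform C h) * t^2 > 0"
        using small_t[of "- Qform C g" "- 2 * (g \<bullet> (C *v h))" "- Qform C h"] QCg by auto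
      have "Qform C (1 *\<^sub>R g + t *\<^sub>R h) = Qform C g + 2*t*(g \<bullet> (C *v h)) + t^2 * Qform C h"
        using Q_lin2[OF symC, of 1 g t h] by simp
      then have "Qform C (g + t *\<^sub>R h) < 0" using t by (simp add: algebra_simps)
      then have "F (yn + t *\<^sub>R v) < 0" unfolding F_def phil Q_scale using t by (simp add: mult_pos_neg)
      then show ?thesis using that by blast
    qed
    define d where "d = xn - xp"
    show False
    proof (rule quartic_vec[OF symC, of "phi A yp xp" "phi1 A yp xp d" "phi A yp d"])
      fix t :: real
      have e1: "phi A yp xp + t *\<^sub>R phi1 A yp xp d + (t^2) *\<^sub>R phi A yp d = phi A yp (xp + t *\<^sub>R d)"
        using phi_line[OF symA] by simp
      have e2: "phi1 A yp xp d + (2*t) *\<^sub>R phi A yp d = phi1 A yp (xp + t *\<^sub>R d) d"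
        using phi1_line[OF symA] by simp
      assume "Qform C (phi A yp xp + t *\<^sub>R phi1 A yp xp d + (t^2) *\<^sub>R phi A yp d) = 0"
      then have "Qform C (phi A yp (xp + t *\<^sub>R d)) = 0" using e1 by simp
      then have "phi A yp (xp + t *\<^sub>R d) \<bullet> (C *v phi1 A yp (xp + t *\<^sub>R d) d) = 0"
        by (intro Hperp phi_Q0[OF symA yp(1)] phi_ker[OF symA yp(1) yp(2)] phi_perp[OF symA yp(1)])
      then show "(phi A yp xp + t *\<^sub>R phi1 A yp xp d + (t^2) *\<^sub>R phi A yp d) \<bullet>
             (C *v (phi1 A yp xp d + (2*t) *\<^sub>R phi A yp d)) = 0" using e1 e2 by simp
    next
      assume "Qform C (phi A yp d) = 0"
      moreover have "phi A yp d \<bullet> (A *v phi1 A yp xp d) = 0"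
        using phi_perp[OF symA yp(1), of d xp] phi1_sym[OF symA, of yp xp d] by simp
      ultimately show "phi A yp d \<bullet> (C *v phi1 A yp xp d) = 0"
        by (intro Hperp phi_Q0[OF symA yp(1)] phi_ker[OF symA yp(1) yp(2)])
    next
      show "Qform C (phi A yp xp) > 0" using Fxp by (simp add: F_def)
    next
      have "phi A yp xp + phi1 A yp xp d + phi A yp d = phi A yp (xp + 1 *\<^sub>R d)"
        using phi_line[OF symA, of yp xp 1 d] by simp
      then show "Qform C (phi A yp xp + phi1 A yp xp d + phi A yp d) < 0"
        using Fxn by (simp add: F_def d_def)
    qed
  qed
qed




lemma two_elems:
  assumes "2 \<le> card A"
  obtains x y where "x \<in> A" "y \<in> A" "x \<noteq> y"
proof -
  have "Suc 1 \<le> card A" using assms by simp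
  then obtain a B where aB: "A = insert a B" "a \<notin> B" "1 \<le> card B" "finite B"
    unfolding card_le_Suc_iff by blast
  then have "B \<noteq> {}" by auto
  then obtain b where "b \<in> B" by blast
  then show ?thesis using that aB by blast
qed

lemma indep_two:
  fixes x y :: "real^'n"
  assumes "independent B" "x \<in> B" "y \<in> B" "x \<noteq> y" "a *\<^sub>R x + b *\<^sub>R y = 0"
  shows "a = 0 \<and> b = 0"
proof (rule ccontr)
  assume "\<not> (a = 0 \<and> b = 0)"
  then consider "a \<noteq> 0" | "b \<noteq> 0" by blast
  then show False
  proof cases
    case 1
    have e: "a *\<^sub>R x = - (b *\<^sub>R y)" using assms(5) by (simp add: eq_neg_iff_add_eq_0)
    have "x = (1/a) *\<^sub>R (a *\<^sub>R x)" using 1 by simp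
    also have "\<dots> = (- b / a) *\<^sub>R y" unfolding e by simp
    finally have xe: "x = (- b / a) *\<^sub>R y" .
    have "y \<in> B - {x}" using assms by auto
    then have "(- b / a) *\<^sub>R y \<in> span (B - {x})" by (intro span_scale span_base)
    then have "x \<in> span (B - {x})" using xe by metis
    then show False using assms(1,2) dependent_def by blast
  next
    case 2
    have e: "b *\<^sub>R y = - (a *\<^sub>R x)" using assms(5) by (simp add: eq_neg_iff_add_eq_0 add.commute)
    have "y = (1/b) *\<^sub>R (b *\<^sub>R y)" using 2 by simp
    also have "\<dots> = (- a / b) *\<^sub>R x" unfolding e by simp
    finally have ye: "y = (- a / b) *\<^sub>R x" .
    have "x \<in> B - {y}" using assms by auto
    then have "(- a / b) *\<^sub>R x \<in> span (B - {y})" by (intro span_scale span_base)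
    then have "y \<in> span (B - {y})" using ye by metis
    then show False using assms(1,3) dependent_def by blast
  qed
qed




lemma pos2:
  fixes A :: "real^'n^'n"
  assumes symA: "symmetric_mat A" and k2: "num_pos_eig A \<ge> 2"
  shows "\<exists>e1 e2. \<forall>a b. (a \<noteq> 0 \<or> b \<noteq> 0) \<longrightarrow> Qform A (a *\<^sub>R e1 + b *\<^sub>R e2) > 0"
proof -
  define S where "S = {c. c > 0 \<and> (\<exists>x. x \<noteq> 0 \<and> A *v x = c *\<^sub>R x)}"
  have sum2: "sum (eig_mult A) S \<ge> 2" using k2 unfolding num_pos_eig_def S_def by simp
  have finS: "finite S"
  proof (rule ccontr)
    assume "infinite S"
    then have "sum (eig_mult A) S = 0" by simp
    then show False using sum2 by simp
  qed
  show ?thesis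
  proof (cases "\<exists>c\<in>S. eig_mult A c \<ge> 2")
    case True
    then obtain c where c: "c \<in> S" "eig_mult A c \<ge> 2" by blast
    define E where "E = {x. A *v x = c *\<^sub>R x}"
    obtain Bs where Bs: "Bs \<subseteq> E" "independent Bs" "card Bs = dim E" by (rule basis_exists)
    have "eig_mult A c = dim E" unfolding eig_mult_def E_def by (rule refl)
    then have "card Bs \<ge> 2" using Bs(3) c(2) by linarith
    then obtain e1 e2 where e: "e1 \<in> Bs" "e2 \<in> Bs" "e1 \<noteq> e2" by (rule two_elems)
    have cpos: "c > 0" using c by (simp add: S_def)
    have "Qform A (a *\<^sub>R e1 + b *\<^sub>R e2) > 0" if ab: "a \<noteq> 0 \<or> b \<noteq> 0" for a b
    proof -
      have ne: "a *\<^sub>R e1 + b *\<^sub>R e2 \<noteq> 0" using indep_two[OF Bs(2) e] ab by blast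
      have "A *v e1 = c *\<^sub>R e1" "A *v e2 = c *\<^sub>R e2" using e Bs(1) by (auto simp: E_def)
      then have "A *v (a *\<^sub>R e1 + b *\<^sub>R e2) = c *\<^sub>R (a *\<^sub>R e1 + b *\<^sub>R e2)" by (simp add: mvs algebra_simps)
      then have "Qform A (a *\<^sub>R e1 + b *\<^sub>R e2) = c * ((a *\<^sub>R e1 + b *\<^sub>R e2) \<bullet> (a *\<^sub>R e1 + b *\<^sub>R e2))"
        unfolding Qform_def by simp
      then show ?thesis using ne cpos by simp
    qed
    then show ?thesis by blast
  next
    case False
    have "sum (eig_mult A) S \<le> sum (\<lambda>_. 1) S"
    proof (rule sum_mono)
      fix c assume "c \<in> S"
      then have "eig_mult A c < 2" using False by auto
      then show "eig_mult A c \<le> 1" by simp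
    qed
    then have "card S \<ge> 2" using sum2 by simp
    then obtain c1 c2 where c: "c1 \<in> S" "c2 \<in> S" "c1 \<noteq> c2" by (rule two_elems)
    obtain x1 where x1: "x1 \<noteq> 0" "A *v x1 = c1 *\<^sub>R x1" "c1 > 0" using c(1) by (auto simp: S_def)
    obtain x2 where x2: "x2 \<noteq> 0" "A *v x2 = c2 *\<^sub>R x2" "c2 > 0" using c(2) by (auto simp: S_def)
    have "c1 * (x1 \<bullet> x2) = c2 * (x1 \<bullet> x2)"
      using sym_dot[OF symA, of x1 x2] x1 x2 by simp
    then have orth: "x1 \<bullet> x2 = 0" using c(3) by simp
    have "Qform A (a *\<^sub>R x1 + b *\<^sub>R x2) > 0" if ab: "a \<noteq> 0 \<or> b \<noteq> 0" for a b
    proof -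
      have "Qform A (a *\<^sub>R x1 + b *\<^sub>R x2) = a^2 * (c1 * (x1 \<bullet> x1)) + 2*a*b*(c2 * (x1 \<bullet> x2)) + b^2 * (c2 * (x2 \<bullet> x2))"
        using Q_lin2[OF symA, of a x1 b x2] x1 x2 by (simp add: Qform_def)
      also have "\<dots> = a^2 * (c1 * (x1 \<bullet> x1)) + b^2 * (c2 * (x2 \<bullet> x2))" using orth by simp
      finally have eq: "Qform A (a *\<^sub>R x1 + b *\<^sub>R x2) = a^2 * (c1 * (x1 \<bullet> x1)) + b^2 * (c2 * (x2 \<bullet> x2))" .
      have p1: "c1 * (x1 \<bullet> x1) > 0" "c2 * (x2 \<bullet> x2) > 0" using x1 x2 by auto
      show ?thesis
      proof (cases "a = 0")
        case True
        then have "b \<noteq> 0" using ab by simp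
        then show ?thesis using eq True p1 by simp
      next
        case False
        then have "a^2 * (c1 * (x1 \<bullet> x1)) > 0" using p1 by simp
        moreover have "b^2 * (c2 * (x2 \<bullet> x2)) \<ge> 0" using p1 by simp
        ultimately show ?thesis using eq by linarith
      qed
    qed
    then show ?thesis by blast
  qed
qed




lemma cont_Q: "continuous_on S (Qform M)"
  unfolding Qform_def by (intro continuous_intros)

lemma closed_Gamma: "closed (Gamma M r)"
  unfolding Gamma_def by (intro closed_Collect_le cont_Q continuous_intros)

lemma fr_Q:
  assumes "z \<in> frontier (Gamma M r)"
  shows "Qform M z = r"
proof -
  have "z \<in> closure (Gamma M r)" "z \<notin> interior (Gamma M r)" using assms by (auto simp: frontier_def)
  then have le: "Qform M z \<le> r" using closed_Gamma closure_closed by (auto simp: Gamma_def)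
  have "open {x. Qform M x < r}" by (intro open_Collect_less cont_Q continuous_intros)
  moreover have "{x. Qform M x < r} \<subseteq> Gamma M r" by (auto simp: Gamma_def)
  ultimately have "{x. Qform M x < r} \<subseteq> interior (Gamma M r)" by (rule interior_maximal[rotated])
  then have "\<not> Qform M z < r" using \<open>z \<notin> interior (Gamma M r)\<close> by blast
  then show ?thesis using le by simp
qed

lemma half_aux: "(x::real) > 0 \<Longrightarrow> e / (2 * x) * x = e / 2"
  by (simp add: field_simps)

lemma fr_intro:
  assumes "z \<in> S" "\<And>e. e > 0 \<Longrightarrow> \<exists>y. dist z y < e \<and> y \<notin> S"
  shows "z \<in> frontier S"
proof -
  have "z \<in> closure S" using assms(1) closure_subset by blast
  moreover have "z \<notin> interior S"
  proof
    assume "z \<in> interior S"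
    then obtain e where "e > 0" "ball z e \<subseteq> S" using mem_interior by blast
    then show False using assms(2)[of e] by auto
  qed
  ultimately show ?thesis by (simp add: frontier_def)
qed

lemma fr_pos:
  assumes "r > 0" "Qform M z = r"
  shows "z \<in> frontier (Gamma M r)"
proof (rule fr_intro)
  show "z \<in> Gamma M r" using assms by (simp add: Gamma_def)
  fix e :: real assume e: "e > 0"
  define d where "d = e / (2 * (norm z + 1))"
  have d0: "d > 0" unfolding d_def using e by (intro divide_pos_pos) (auto intro: add_nonneg_pos)
  have "d * norm z \<le> d * (norm z + 1)" using d0 by simp
  also have "\<dots> = e/2" unfolding d_def by (rule half_aux) (simp add: add_nonneg_pos)
  finally have dz: "d * norm z < e" using e by simp
  have "dist z ((1+d) *\<^sub>R z) = d * norm z"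
    by (simp add: dist_norm algebra_simps) (simp add: d0 less_imp_le)
  moreover have "Qform M ((1+d) *\<^sub>R z) = (1+d)^2 * r" using assms by (simp add: Q_scale)
  moreover have "(1+d)^2 * r > r" using d0 assms(1)
    by (simp add: power2_eq_square algebra_simps) (simp add: mult_pos_pos add_pos_pos)
  ultimately show "\<exists>y. dist z y < e \<and> y \<notin> Gamma M r" using dz
    by (intro exI[of _ "(1+d) *\<^sub>R z"]) (auto simp: Gamma_def)
qed

lemma fr_zero:
  assumes sym: "symmetric_mat M" and u: "Qform M u > 0" and z: "Qform M z = 0"
  shows "z \<in> frontier (Gamma M 0)"
proof (rule fr_intro)
  show "z \<in> Gamma M 0" using z by (simp add: Gamma_def)
  fix e :: real assume e: "e > 0"
  obtain u' where u': "Qform M u' > 0" "z \<bullet> (M *v u') \<ge> 0" "norm u' = norm u"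
  proof (cases "z \<bullet> (M *v u) \<ge> 0")
    case True then show ?thesis using that u by blast
  next
    case False
    have "Qform M ((-1) *\<^sub>R u) > 0" using u Q_scale[of M "-1" u] by simp
    moreover have "z \<bullet> (M *v ((-1) *\<^sub>R u)) \<ge> 0" using False matrix_vector_mult_scaleR[of M "-1" u] by simp
    moreover have "norm ((-1) *\<^sub>R u) = norm u" by simp
    ultimately show ?thesis using that by blast
  qed
  define d where "d = e / (2 * (norm u + 1))"
  have d0: "d > 0" unfolding d_def using e by (intro divide_pos_pos) (auto intro: add_nonneg_pos)
  have "d * norm u \<le> d * (norm u + 1)" using d0 by simp
  also have "\<dots> = e/2" unfolding d_def by (rule half_aux) (simp add: add_nonneg_pos)
  finally have du: "d * norm u < e" using e by simp
  have "dist z (1 *\<^sub>R z + d *\<^sub>R u') = d * norm u"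
    using u'(3) d0 by (simp add: dist_norm)
  moreover have "Qform M (1 *\<^sub>R z + d *\<^sub>R u') = 2*d*(z \<bullet> (M *v u')) + d^2 * Qform M u'"
    using Q_lin2[OF sym, of 1 z d u'] z by simp
  moreover have "2*d*(z \<bullet> (M *v u')) + d^2 * Qform M u' > 0"
  proof -
    have "2*d*(z \<bullet> (M *v u')) \<ge> 0" using d0 u' by simp
    moreover have "d^2 * Qform M u' > 0" using d0 u' by simp
    ultimately show ?thesis by linarith
  qed
  ultimately show "\<exists>y. dist z y < e \<and> y \<notin> Gamma M 0" using du
    by (intro exI[of _ "1 *\<^sub>R z + d *\<^sub>R u'"]) (auto simp: Gamma_def)
qed




lemma core0:
  fixes A B :: "real^'n^'n"
  assumes symA: "symmetric_mat A" and symB: "symmetric_mat B"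
    and pp: "\<And>h. \<exists>x. x \<bullet> h = 0 \<and> Qform A x > 0"
    and y0: "Qform A y0 = 0" "A *v y0 \<noteq> 0"
    and u: "Qform A u > 0" "Qform B u > 0" and w: "Qform A w < 0" "Qform B w < 0"
    and H: "\<And>z. Qform A z = 0 \<Longrightarrow> Qform B z = 0 \<Longrightarrow> A *v z \<noteq> 0 \<Longrightarrow> \<exists>\<mu>. (B - A) *v z = \<mu> *\<^sub>R (A *v z)"
  shows "Gamma A 0 \<subseteq> Gamma B 0 \<or> Gamma B 0 \<subseteq> Gamma A 0"
proof (rule ccontr)
  assume "\<not> (Gamma A 0 \<subseteq> Gamma B 0 \<or> Gamma B 0 \<subseteq> Gamma A 0)"
  then have n1: "\<not> Gamma A 0 \<subseteq> Gamma B 0" and n2: "\<not> Gamma B 0 \<subseteq> Gamma A 0" by auto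
  from n1 obtain q where "q \<in> Gamma A 0" "q \<notin> Gamma B 0" by blast
  then have q: "Qform A q \<le> 0" "Qform B q > 0" by (auto simp: Gamma_def)
  from n2 obtain p where "p \<in> Gamma B 0" "p \<notin> Gamma A 0" by blast
  then have p: "Qform B p \<le> 0" "Qform A p > 0" by (auto simp: Gamma_def)
  obtain y1 where y1: "Qform A y1 = 0" "Qform B y1 > 0" using S1[OF symA symB u q] by blast
  obtain yp where yp: "Qform A yp = 0" "A *v yp \<noteq> 0" "Qform B yp > 0"
    using S2[OF symA symB y0 y1] by blast
  obtain y2 where y2: "Qform A y2 = 0" "Qform B y2 < 0" using S1'[OF symA symB w p(2) p(1)] by blast
  have "Qform (- B) y2 > 0" using y2 by (simp add: Q_neg)
  then obtain yn where yn: "Qform A yn = 0" "A *v yn \<noteq> 0" "Qform (- B) yn > 0"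
    using S2[OF symA sym_neg[OF symB] y0 y2(1)] by blast
  have "Qform B yn < 0" using yn(3) by (simp add: Q_neg)
  then show False using S3[OF symA symB pp H yp yn(1,2)] by blast
qed

lemma seg_lemma:
  fixes M C :: "real^'n^'n"
  assumes symM: "symmetric_mat M" and symC: "symmetric_mat C"
    and HM: "\<And>z. Qform M z > 0 \<Longrightarrow> Qform C z = 0 \<Longrightarrow> C *v z = 0"
    and a: "Qform M a > 0" "Qform C a > 0" and b: "Qform M b > 0" "Qform C b < 0"
  shows False
proof -
  obtain b' where b': "Qform M b' > 0" "Qform C b' < 0" "a \<bullet> (M *v b') \<ge> 0"
  proof (cases "a \<bullet> (M *v b) \<ge> 0")
    case True then show ?thesis using that b by blast
  next
    case False
    have "Qform M ((-1) *\<^sub>R b) > 0" "Qform C ((-1) *\<^sub>R b) < 0" using b Q_scale[of M "-1" b] Q_scale[of C "-1" b] by simp_all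
    moreover have "a \<bullet> (M *v ((-1) *\<^sub>R b)) \<ge> 0" using False matrix_vector_mult_scaleR[of M "-1" b] by simp
    ultimately show ?thesis using that by blast
  qed
  obtain t where t: "0 \<le> t" "t \<le> 1" "Qform C ((1-t) *\<^sub>R a + t *\<^sub>R b') = 0"
    using IVT2'[of "\<lambda>t. Qform C ((1-t) *\<^sub>R a + t *\<^sub>R b')" 1 0 0] a b' cont_Q_seg by force
  have t0: "t \<noteq> 0" "t \<noteq> 1" using t a b' by auto
  define w where "w = (1-t) *\<^sub>R a + t *\<^sub>R b'"
  have "Qform M w > 0" unfolding w_def by (rule seg_pos[OF symM]) (use a b' t in auto)
  then have Cw: "C *v w = 0" using HM t(3) w_def by blast
  have sC: "\<And>x y. (C *v x) \<bullet> y = x \<bullet> (C *v y)" using sym_dot[OF symC] by blast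
  define X where "X = a \<bullet> (C *v b')"
  have "a \<bullet> (C *v w) = 0" using Cw by simp
  then have e1: "(1-t) * Qform C a + t * X = 0" unfolding w_def X_def Qform_def by (simp add: mvs)
  have "b' \<bullet> (C *v w) = 0" using Cw by simp
  moreover have "b' \<bullet> (C *v a) = X" unfolding X_def using sC[of b' a] by (simp add: inner_commute)
  ultimately have e2: "(1-t) * X + t * Qform C b' = 0" unfolding w_def Qform_def by (simp add: mvs)
  have "(1-t) * ((1-t) * Qform C a + t * X) = 0" using e1 by simp
  moreover have "t * ((1-t) * X + t * Qform C b') = 0" using e2 by simp
  ultimately have "(1-t)^2 * Qform C a = t^2 * Qform C b'" by (simp add: algebra_simps power2_eq_square)
  moreover have "(1-t)^2 * Qform C a > 0" using t0 a by simp
  moreover have "t^2 * Qform C b' < 0" using t0 b' by (simp add: mult_pos_neg)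
  ultimately show False by simp
qed

lemma corer:
  fixes A B :: "real^'n^'n"
  assumes symA: "symmetric_mat A" and symB: "symmetric_mat B" and r: "r > 0"
    and u: "Qform A u > 0" "Qform B u > 0"
    and Hr: "\<And>z. Qform A z > 0 \<or> Qform B z > 0 \<Longrightarrow> Qform A z = Qform B z \<Longrightarrow> (B - A) *v z = 0"
  shows "Gamma A r \<subseteq> Gamma B r \<or> Gamma B r \<subseteq> Gamma A r"
proof -
  define C where "C = B - A"
  have symC: "symmetric_mat C" unfolding C_def by (rule sym_diff[OF symA symB])
  have QC: "\<And>z. Qform C z = Qform B z - Qform A z" unfolding C_def by (rule Q_diff)
  have HA: "C *v z = 0" if "Qform A z > 0" "Qform C z = 0" for z
    using Hr[of z] that QC[of z] unfolding C_def by simp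
  have HB: "C *v z = 0" if "Qform B z > 0" "Qform C z = 0" for z
    using Hr[of z] that QC[of z] unfolding C_def by simp
  show ?thesis
  proof (cases "\<forall>z. Qform A z > 0 \<longrightarrow> Qform C z \<ge> 0")
    case True
    have "Gamma B r \<subseteq> Gamma A r"
    proof
      fix z assume "z \<in> Gamma B r"
      then have zB: "Qform B z \<le> r" by (simp add: Gamma_def)
      show "z \<in> Gamma A r"
      proof (rule ccontr)
        assume "z \<notin> Gamma A r"
        then have "Qform A z > r" by (simp add: Gamma_def)
        then have "Qform C z \<ge> 0" using True r by auto
        then show False using QC[of z] zB \<open>Qform A z > r\<close> by simp
      qed
    qed
    then show ?thesis by blast
  next
    case c1: False
    show ?thesis
    proof (cases "\<forall>z. Qform B z > 0 \<longrightarrow> Qform C z \<le> 0")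
      case True
      have "Gamma A r \<subseteq> Gamma B r"
      proof
        fix z assume "z \<in> Gamma A r"
        then have zA: "Qform A z \<le> r" by (simp add: Gamma_def)
        show "z \<in> Gamma B r"
        proof (rule ccontr)
          assume "z \<notin> Gamma B r"
          then have "Qform B z > r" by (simp add: Gamma_def)
          then have "Qform C z \<le> 0" using True r by auto
          then show False using QC[of z] zA \<open>Qform B z > r\<close> by simp
        qed
      qed
      then show ?thesis by blast
    next
      case False
      obtain a where a: "Qform A a > 0" "Qform C a < 0" using c1 by (auto simp: not_le)
      obtain b where b: "Qform B b > 0" "Qform C b > 0" using False by (auto simp: not_le)
      have "\<not> Qform C u > 0" using seg_lemma[OF symA symC HA, of u a] u a by blast
      moreover have "\<not> Qform C u < 0" using seg_lemma[OF symB symC HB, of b u] u b by blast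
      ultimately have Cu0: "Qform C u = 0" by simp
      then have Cu: "C *v u = 0" using HA u by blast
      obtain t where t: "t > 0" "Qform B u + (2 * (u \<bullet> (B *v a))) * t + Qform B a * t^2 > 0"
        using small_t[of "Qform B u" "2 * (u \<bullet> (B *v a))" "Qform B a"] u by blast
      have "Qform B (1 *\<^sub>R u + t *\<^sub>R a) = Qform B u + (2 * (u \<bullet> (B *v a))) * t + Qform B a * t^2"
        using Q_lin2[OF symB, of 1 u t a] by (simp add: algebra_simps)
      then have vB: "Qform B (1 *\<^sub>R u + t *\<^sub>R a) > 0" using t by simp
      have "u \<bullet> (C *v a) = 0" using sym_dot[OF symC, of u a] Cu by simp
      then have "Qform C (1 *\<^sub>R u + t *\<^sub>R a) = t^2 * Qform C a"
        using Q_lin2[OF symC, of 1 u t a] Cu0 by simp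
      then have vC: "Qform C (1 *\<^sub>R u + t *\<^sub>R a) < 0" using t a by (simp add: mult_pos_neg)
      show ?thesis using seg_lemma[OF symB symC HB, of b "1 *\<^sub>R u + t *\<^sub>R a"] b vB vC by blast
    qed
  qed
qed

lemma near:
  fixes A :: "real^'n^'n"
  assumes "Qform A x \<noteq> 0"
  shows "\<exists>e>0. \<forall>B. norm (B - A) < e \<longrightarrow> \<bar>Qform B x - Qform A x\<bar> < \<bar>Qform A x\<bar>"
proof -
  define K where "K = real CARD('n) * (norm x)^2 + 1"
  have K0: "K > 0" unfolding K_def by (simp add: add_nonneg_pos)
  define e where "e = \<bar>Qform A x\<bar> / K"
  have e0: "e > 0" using assms K0 by (simp add: e_def)
  have "\<bar>Qform B x - Qform A x\<bar> < \<bar>Qform A x\<bar>" if "norm (B - A) < e" for B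
  proof -
    have "\<bar>Qform B x - Qform A x\<bar> = \<bar>Qform (B - A) x\<bar>" by (simp add: Q_diff)
    also have "\<dots> \<le> real CARD('n) * norm (B - A) * (norm x)^2" by (rule Q_bound)
    also have "\<dots> \<le> norm (B - A) * K" unfolding K_def by (simp add: algebra_simps)
    also have "\<dots> < e * K" using that K0 by simp
    also have "\<dots> = \<bar>Qform A x\<bar>" unfolding e_def using K0 by simp
    finally show ?thesis .
  qed
  then show ?thesis using e0 by blast
qed




lemma nontrans:
  assumes "\<not> transversal_at A B z"
  obtains a b where "a *\<^sub>R (A *v z) + b *\<^sub>R (B *v z) = 0" "a \<noteq> 0 \<or> b \<noteq> 0"
  using assms unfolding transversal_at_def by blast

theorem theorem2p6:
  fixes W :: "(real^'n^'n) set" and A :: "real^'n^'n" and r :: real and k l :: nat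
  assumes "subspace W"
    and "\<forall>M\<in>W. symmetric_mat M"
    and "W \<noteq> {0}"
    and "r \<ge> 0"
    and "A \<in> W"
    and "\<forall>M\<in>W. rank M \<le> rank A"
    and "signature A = (k, l)"
    and "k \<ge> 2"
  shows "\<exists>\<epsilon>>0. \<forall>B\<in>W. norm (B - A) < \<epsilon> \<longrightarrow>
           bdry_is_variety A r \<longrightarrow> bdry_is_variety B r \<longrightarrow>
           \<not> (\<exists>z \<in> frontier (Gamma A r) \<inter> frontier (Gamma B r). transversal_at A B z) \<longrightarrow>
           Gamma A r \<subseteq> Gamma B r \<or> Gamma B r \<subseteq> Gamma A r"
proof -
  have symA: "symmetric_mat A" using assms(2,5) by blast
  have "num_pos_eig A \<ge> 2" using assms(7,8) by (simp add: signature_def)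
  then obtain e1 e2 where PD: "\<And>a b. a \<noteq> 0 \<or> b \<noteq> 0 \<Longrightarrow> Qform A (a *\<^sub>R e1 + b *\<^sub>R e2) > 0"
    using pos2[OF symA] by blast
  have u: "Qform A e1 > 0" using PD[of 1 0] by simp
  have pp: "\<exists>x. x \<bullet> h = 0 \<and> Qform A x > 0" for h
  proof (cases "e1 \<bullet> h = 0 \<and> e2 \<bullet> h = 0")
    case True then show ?thesis using u by blast
  next
    case False
    define x where "x = (e2 \<bullet> h) *\<^sub>R e1 + (- (e1 \<bullet> h)) *\<^sub>R e2"
    have "x \<bullet> h = 0" unfolding x_def by (simp add: inner_add_left algebra_simps)
    moreover have "Qform A x > 0" unfolding x_def using False by (intro PD) auto
    ultimately show ?thesis by blast
  qed
  obtain eu where eu: "eu > 0" "\<And>B. norm (B - A) < eu \<Longrightarrow> \<bar>Qform B e1 - Qform A e1\<bar> < \<bar>Qform A e1\<bar>"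
    using near[of A e1] u by auto
  have uB: "Qform B e1 > 0" if "norm (B - A) < eu" for B using eu(2)[OF that] u by linarith
  show ?thesis
  proof (cases "r > 0")
    case rpos: True
    have "Gamma A r \<subseteq> Gamma B r \<or> Gamma B r \<subseteq> Gamma A r"
      if B: "B \<in> W" "norm (B - A) < eu"
        and nt: "\<not> (\<exists>z \<in> frontier (Gamma A r) \<inter> frontier (Gamma B r). transversal_at A B z)" for B
    proof -
      have symB: "symmetric_mat B" using assms(2) B by blast
      have Hr: "(B - A) *v z = 0" if z: "Qform A z > 0 \<or> Qform B z > 0" "Qform A z = Qform B z" for z
      proof -
        define s where "s = Qform A z"
        have s0: "s > 0" using z s_def by auto
        define c where "c = sqrt (r / s)"
        have c0: "c > 0" using s0 rpos by (simp add: c_def)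
        have cs: "c^2 * s = r" using s0 rpos by (simp add: c_def)
        have qa: "Qform A (c *\<^sub>R z) = r" using cs by (simp add: Q_scale s_def)
        have qb: "Qform B (c *\<^sub>R z) = r" using cs z(2) by (simp add: Q_scale s_def)
        have "c *\<^sub>R z \<in> frontier (Gamma A r) \<inter> frontier (Gamma B r)"
          using fr_pos[OF rpos qa] fr_pos[OF rpos qb] by blast
        then have "\<not> transversal_at A B (c *\<^sub>R z)" using nt by blast
        then obtain a b where ab: "a *\<^sub>R (A *v (c *\<^sub>R z)) + b *\<^sub>R (B *v (c *\<^sub>R z)) = 0" "a \<noteq> 0 \<or> b \<noteq> 0"
          by (rule nontrans)
        have "(c *\<^sub>R z) \<bullet> (a *\<^sub>R (A *v (c *\<^sub>R z)) + b *\<^sub>R (B *v (c *\<^sub>R z))) = 0" using ab by simp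
        then have "a * r + b * r = 0" using qa qb unfolding Qform_def by (simp add: inner_add_right)
        then have "(a + b) * r = 0" by (simp add: algebra_simps)
        then have ba: "b = - a" using rpos by simp
        then have a0: "a \<noteq> 0" using ab by auto
        have "a *\<^sub>R (A *v (c *\<^sub>R z) - B *v (c *\<^sub>R z)) = 0" using ab(1) ba by (simp add: algebra_simps)
        then have "A *v (c *\<^sub>R z) - B *v (c *\<^sub>R z) = 0" using a0 by simp
        then have "A *v z = B *v z" using c0 by (simp add: mvs)
        then show ?thesis by (simp add: matrix_vector_mult_diff_rdistrib)
      qed
      show ?thesis by (rule corer[OF symA symB rpos u uB[OF B(2)] Hr])
    qed
    then show ?thesis using eu(1) by blast
  next
    case False
    then have r0: "r = 0" using assms(4) by simp
    show ?thesis
    proof (cases "bdry_is_variety A 0")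
      case False
      then show ?thesis using eu(1) r0 by blast
    next
      case True
      then obtain z0 where z0: "z0 \<in> frontier (Gamma A 0)" "A *v z0 \<noteq> 0" unfolding bdry_is_variety_def by blast
      have y0: "Qform A z0 = 0" using fr_Q[OF z0(1)] .
      define g where "g = A *v z0"
      obtain t where t: "t > 0" "2 * (g \<bullet> g) + (- Qform A g) * t + 0 * t^2 > 0"
        using small_t[of "2 * (g \<bullet> g)" "- Qform A g" 0] z0(2) g_def by auto
      have zg: "z0 \<bullet> (A *v g) = g \<bullet> g" using sym_dot[OF symA, of z0 g] g_def by simp
      have "Qform A (1 *\<^sub>R z0 + (-t) *\<^sub>R g) = - t * (2 * (g \<bullet> g) + (- Qform A g) * t)"
        using Q_lin2[OF symA, of 1 z0 "-t" g] y0 zg by (simp add: algebra_simps power2_eq_square)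
      then have wA: "Qform A (1 *\<^sub>R z0 + (-t) *\<^sub>R g) < 0" using t by (simp add: mult_pos_neg)
      define w where "w = 1 *\<^sub>R z0 + (-t) *\<^sub>R g"
      obtain ew where ew: "ew > 0" "\<And>B. norm (B - A) < ew \<Longrightarrow> \<bar>Qform B w - Qform A w\<bar> < \<bar>Qform A w\<bar>"
        using near[of A w] wA w_def by auto
      have "Gamma A 0 \<subseteq> Gamma B 0 \<or> Gamma B 0 \<subseteq> Gamma A 0"
        if B: "B \<in> W" "norm (B - A) < min eu ew"
          and nt: "\<not> (\<exists>z \<in> frontier (Gamma A 0) \<inter> frontier (Gamma B 0). transversal_at A B z)" for B
      proof -
        have symB: "symmetric_mat B" using assms(2) B by blast
        have uB': "Qform B e1 > 0" using uB B(2) by simp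
        have wB: "Qform B w < 0" using ew(2)[of B] B(2) wA w_def by simp
        have H: "\<exists>\<mu>. (B - A) *v z = \<mu> *\<^sub>R (A *v z)"
          if z: "Qform A z = 0" "Qform B z = 0" "A *v z \<noteq> 0" for z
        proof -
          have "z \<in> frontier (Gamma A 0) \<inter> frontier (Gamma B 0)"
            using fr_zero[OF symA u z(1)] fr_zero[OF symB uB' z(2)] by blast
          then have "\<not> transversal_at A B z" using nt by blast
          then obtain a b where ab: "a *\<^sub>R (A *v z) + b *\<^sub>R (B *v z) = 0" "a \<noteq> 0 \<or> b \<noteq> 0"
            by (rule nontrans)
          have b0: "b \<noteq> 0" using ab z(3) by auto
          have "b *\<^sub>R (B *v z) = - (a *\<^sub>R (A *v z))" using ab(1) by (simp add: eq_neg_iff_add_eq_0 add.commute)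
          then have "B *v z = (- a / b) *\<^sub>R (A *v z)" using b0
            by (metis (no_types, lifting) divide_inverse_commute inverse_eq_divide scaleR_minus_left scaleR_scaleR vector_fraction_eq_iff)
          then have "(B - A) *v z = (- a / b - 1) *\<^sub>R (A *v z)"
            by (simp add: matrix_vector_mult_diff_rdistrib algebra_simps)
          then show ?thesis by blast
        qed
        show ?thesis by (rule core0[OF symA symB pp y0 z0(2) u uB' wA[folded w_def] wB H])
      qed
      then show ?thesis using r0 eu(1) ew(1) by (intro exI[of _ "min eu ew"]) auto
    qed
  qed
qed


end
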